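(* Let $p$ be a prime and let $A$, $B$ be $p$-groups with $|A|=p^a$, $|B|=p^b$, $a,b\ge1$. Suppose the maximum order of an element of $A$ is $p^d$ and the maximum order of an element of $B$ is $p^e$. Then the maximum order of an element of $A\wr B$ is $p^{d+e}$, and for every integer $k$, $$r_{A\wr B,k}=\sum_{i=0}^{e}\left(r_{B,i}-r_{B,i+1}\right)r_{A,k-i}^{\,p^{b-e+i}}.$$
   Context: For a finite $p$-group $G$ with $|G|=p^g$ and maximum element order $p^{f}$, and for $k\in\mathbb{Z}$, define $r_{G,k}=\frac{1}{p^g}\cdot\#\{x\in G:\ \mathrm{order}(x)\le p^{f-k}\}$ (so $r_{G,k}=1$ for $k\le 0$ and $r_{G,k}=0$ for $k>f$). For groups $A,B$, let $K=\prod_{b\in B}A$, on which $B$ acts by $x\cdot(\alpha_b)_b=(\alpha_{x^{-1}b})_b$ for $x\in B$; the wreath product $A\wr B$ is the semidirect product $K\rtimes B$ for this action. *)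

theory Defs
  imports "HOL-Algebra.Algebra"
begin

definition max_elem_ord :: "('a, 'b) monoid_scheme \<Rightarrow> nat" where
  "max_elem_ord G = Max (group.ord G ` carrier G)"

text \<open>r_{G,k}: proportion of elements x with ord x \<le> p^(f-k), where p^f is the
  maximum element order; p^(f-k) = max_elem_ord G * p powi (-k).\<close>
definition r_ratio :: "nat \<Rightarrow> ('a, 'b) monoid_scheme \<Rightarrow> int \<Rightarrow> real" where
  "r_ratio p G k =
     real (card {x \<in> carrier G. real (group.ord G x) \<le> real (max_elem_ord G) * (real p) powi (- k)})
     / real (card (carrier G))"

text \<open>Wreath product A wr B = K \<rtimes> B with K = functions carrier B \<rightarrow> carrier A,
  action (x\<cdot>\<alpha>)_b = \<alpha>_{x^{-1} b}; so (\<alpha>,x)(\<beta>,y) = (\<alpha>\<cdot>(x\<cdot>\<beta>), xy).\<close>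
definition wreath :: "('a, 'c) monoid_scheme \<Rightarrow> ('b, 'd) monoid_scheme \<Rightarrow> (('b \<Rightarrow> 'a) \<times> 'b) monoid" where
  "wreath A B =
    \<lparr> carrier = (carrier B \<rightarrow>\<^sub>E carrier A) \<times> carrier B,
      monoid.mult = (\<lambda>(f, x) (g, y). ((\<lambda>b\<in>carrier B. f b \<otimes>\<^bsub>A\<^esub> g (inv\<^bsub>B\<^esub> x \<otimes>\<^bsub>B\<^esub> b)), x \<otimes>\<^bsub>B\<^esub> y)),
      one = ((\<lambda>b\<in>carrier B. \<one>\<^bsub>A\<^esub>), \<one>\<^bsub>B\<^esub>) \<rparr>"

end

theory Submission
  imports Defs
begin

lemma wreath_carrier: "carrier (wreath A B) = (carrier B \<rightarrow>\<^sub>E carrier A) \<times> carrier B"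
  by (simp add: wreath_def)
lemma wreath_one: "\<one>\<^bsub>wreath A B\<^esub> = ((\<lambda>b\<in>carrier B. \<one>\<^bsub>A\<^esub>), \<one>\<^bsub>B\<^esub>)"
  by (simp add: wreath_def)
lemma wreath_mult: "(f, x) \<otimes>\<^bsub>wreath A B\<^esub> (g, y) = ((\<lambda>b\<in>carrier B. f b \<otimes>\<^bsub>A\<^esub> g (inv\<^bsub>B\<^esub> x \<otimes>\<^bsub>B\<^esub> b)), x \<otimes>\<^bsub>B\<^esub> y)"
  by (simp add: wreath_def)

lemma wreath_group:
  assumes A: "group A" and B: "group B"
  shows "group (wreath A B)"
proof (rule groupI)
  interpret A: group A by fact
  interpret B: group B by fact
  show "x \<otimes>\<^bsub>wreath A B\<^esub> y \<in> carrier (wreath A B)"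
    if "x \<in> carrier (wreath A B)" "y \<in> carrier (wreath A B)" for x y
    using that by (cases x; cases y) (auto simp: wreath_carrier wreath_mult PiE_iff)
  show "\<one>\<^bsub>wreath A B\<^esub> \<in> carrier (wreath A B)"
    by (auto simp: wreath_carrier wreath_one)
  show "x \<otimes>\<^bsub>wreath A B\<^esub> y \<otimes>\<^bsub>wreath A B\<^esub> z = x \<otimes>\<^bsub>wreath A B\<^esub> (y \<otimes>\<^bsub>wreath A B\<^esub> z)"
    if "x \<in> carrier (wreath A B)" "y \<in> carrier (wreath A B)" "z \<in> carrier (wreath A B)" for x y z
    using that
    by (cases x; cases y; cases z)
       (auto simp: wreath_carrier wreath_mult PiE_iff A.m_assoc B.m_assoc B.inv_mult_group intro!: ext)
  show "\<one>\<^bsub>wreath A B\<^esub> \<otimes>\<^bsub>wreath A B\<^esub> x = x" if "x \<in> carrier (wreath A B)" for x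
    using that by (cases x) (auto simp: wreath_carrier wreath_mult wreath_one PiE_iff extensional_def intro!: ext)
  show "\<exists>y\<in>carrier (wreath A B). y \<otimes>\<^bsub>wreath A B\<^esub> x = \<one>\<^bsub>wreath A B\<^esub>"
    if "x \<in> carrier (wreath A B)" for x
  proof -
    obtain f u where x: "x = (f, u)" by (cases x)
    with that have f: "f \<in> carrier B \<rightarrow>\<^sub>E carrier A" and u: "u \<in> carrier B"
      by (auto simp: wreath_carrier)
    let ?y = "((\<lambda>b\<in>carrier B. inv\<^bsub>A\<^esub> (f (u \<otimes>\<^bsub>B\<^esub> b))), inv\<^bsub>B\<^esub> u)"
    have "?y \<in> carrier (wreath A B)" using f u by (auto simp: wreath_carrier PiE_iff)
    moreover have "?y \<otimes>\<^bsub>wreath A B\<^esub> x = \<one>\<^bsub>wreath A B\<^esub>"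
      using f u by (auto simp: x wreath_mult wreath_one PiE_iff intro!: ext)
    ultimately show ?thesis by blast
  qed
qed

primrec sp :: "('a,'c) monoid_scheme \<Rightarrow> (nat \<Rightarrow> 'a) \<Rightarrow> nat \<Rightarrow> 'a" where
  "sp G f 0 = \<one>\<^bsub>G\<^esub>"
| "sp G f (Suc k) = sp G f k \<otimes>\<^bsub>G\<^esub> f k"

context group begin

lemma sp_closed: "(\<And>s. s < k \<Longrightarrow> f s \<in> carrier G) \<Longrightarrow> sp G f k \<in> carrier G"
  by (induction k) auto

lemma sp_cong: "(\<And>s. s < k \<Longrightarrow> f s = g s) \<Longrightarrow> sp G f k = sp G g k"
  by (induction k) auto

lemma sp_add:
  assumes "\<And>s. s < m + k \<Longrightarrow> f s \<in> carrier G"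
  shows "sp G f (m + k) = sp G f m \<otimes> sp G (\<lambda>s. f (m + s)) k"
  using assms
proof (induction k)
  case 0
  then show ?case by (simp add: sp_closed)
next
  case (Suc k)
  have c1: "sp G f m \<in> carrier G" by (rule sp_closed) (use Suc.prems in auto)
  have c2: "sp G (\<lambda>s. f (m + s)) k \<in> carrier G" by (rule sp_closed) (use Suc.prems in auto)
  have "sp G f (m + Suc k) = sp G f (m + k) \<otimes> f (m + k)" by simp
  also have "\<dots> = sp G f m \<otimes> sp G (\<lambda>s. f (m + s)) k \<otimes> f (m + k)"
    using Suc by simp
  also have "\<dots> = sp G f m \<otimes> sp G (\<lambda>s. f (m + s)) (Suc k)"
    using c1 c2 Suc.prems by (simp add: m_assoc)
  finally show ?case .
qed

lemma sp_periodic: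
  assumes "\<And>s. f (s + n) = f s" "\<And>s. f s \<in> carrier G"
  shows "sp G f (q * n) = sp G f n [^] q"
proof (induction q)
  case 0
  then show ?case by simp
next
  case (Suc q)
  have "sp G f (Suc q * n) = sp G f (n + q * n)" by simp
  also have "\<dots> = sp G f n \<otimes> sp G (\<lambda>s. f (n + s)) (q * n)"
    using assms by (intro sp_add) auto
  also have "(\<lambda>s. f (n + s)) = f" using assms(1) by (auto simp: add.commute)
  also have "sp G f n \<otimes> sp G f (q * n) = sp G f n [^] Suc q"
    using Suc assms by (subst nat_pow_Suc2) (simp_all add: sp_closed)
  finally show ?case .
qed

lemma conj_pow:
  assumes "g \<in> carrier G" "h \<in> carrier G"
  shows "(inv g \<otimes> h \<otimes> g) [^] (n::nat) = inv g \<otimes> h [^] n \<otimes> g"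
proof (induction n)
  case 0
  then show ?case using assms by simp
next
  case (Suc n)
  have "(inv g \<otimes> h \<otimes> g) [^] Suc n = (inv g \<otimes> h [^] n \<otimes> g) \<otimes> (inv g \<otimes> h \<otimes> g)"
    using Suc by simp
  also have "\<dots> = inv g \<otimes> (h [^] n \<otimes> (g \<otimes> inv g) \<otimes> h) \<otimes> g"
    using assms by (simp add: m_assoc) (simp add: m_assoc[symmetric])
  also have "h [^] n \<otimes> (g \<otimes> inv g) \<otimes> h = h [^] Suc n"
    using assms by simp
  finally show ?case .
qed

lemma conj_pow_eq_one:
  assumes "g \<in> carrier G" "h \<in> carrier G"
  shows "(inv g \<otimes> h \<otimes> g) [^] (n::nat) = \<one> \<longleftrightarrow> h [^] n = \<one>"
proof -
  have "(inv g \<otimes> h \<otimes> g) [^] n = \<one> \<longleftrightarrow> inv g \<otimes> h [^] n \<otimes> g = \<one>"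
    using assms by (simp add: conj_pow)
  also have "\<dots> \<longleftrightarrow> h [^] n = \<one>"
  proof
    assume "inv g \<otimes> h [^] n \<otimes> g = \<one>"
    then have "g \<otimes> (inv g \<otimes> h [^] n \<otimes> g) \<otimes> inv g = g \<otimes> \<one> \<otimes> inv g" by simp
    then show "h [^] n = \<one>" using assms by (simp add: m_assoc[symmetric]) (simp add: m_assoc)
  next
    assume "h [^] n = \<one>" then show "inv g \<otimes> h [^] n \<otimes> g = \<one>" using assms by simp
  qed
  finally show ?thesis .
qed

end

lemma wreath_pow:
  assumes A: "group A" and B: "group B"
    and al: "\<alpha> \<in> carrier B \<rightarrow>\<^sub>E carrier A" and x: "x \<in> carrier B"
  shows "(\<alpha>, x) [^]\<^bsub>wreath A B\<^esub> (k::nat)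
     = ((\<lambda>b\<in>carrier B. sp A (\<lambda>s. \<alpha> (inv\<^bsub>B\<^esub> x [^]\<^bsub>B\<^esub> s \<otimes>\<^bsub>B\<^esub> b)) k), x [^]\<^bsub>B\<^esub> k)"
proof (induction k)
  interpret A: group A by fact
  interpret B: group B by fact
  case 0
  then show ?case by (simp add: wreath_one restrict_def)
next
  interpret A: group A by fact
  interpret B: group B by fact
  case (Suc k)
  show ?case
    using al x
    by (simp add: Suc wreath_mult B.nat_pow_inv PiE_iff restrict_def fun_eq_iff)
qed

locale wr = A: group A + B: group B
  for A :: "('a, 'c) monoid_scheme" and B :: "('b, 'd) monoid_scheme" +
  fixes y :: 'b and P :: "'a \<Rightarrow> bool"
  assumes y: "y \<in> carrier B" and finB: "finite (carrier B)" and finA: "finite (carrier A)"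
    and Pconj: "\<And>g h. g \<in> carrier A \<Longrightarrow> h \<in> carrier A \<Longrightarrow> P (inv\<^bsub>A\<^esub> g \<otimes>\<^bsub>A\<^esub> h \<otimes>\<^bsub>A\<^esub> g) = P h"
begin

abbreviation n where "n \<equiv> B.ord y"

definition bet :: "('b \<Rightarrow> 'a) \<Rightarrow> 'b \<Rightarrow> 'a" where
  "bet \<alpha> b = sp A (\<lambda>s. \<alpha> (y [^]\<^bsub>B\<^esub> s \<otimes>\<^bsub>B\<^esub> b)) n"

definition closed where "closed V \<longleftrightarrow> V \<subseteq> carrier B \<and> (\<forall>b\<in>V. y \<otimes>\<^bsub>B\<^esub> b \<in> V)"

definition orb where "orb t = (\<lambda>s. y [^]\<^bsub>B\<^esub> s \<otimes>\<^bsub>B\<^esub> t) ` {..<n}"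

definition GG where "GG V = {\<alpha> \<in> V \<rightarrow>\<^sub>E carrier A. \<forall>b\<in>V. P (bet \<alpha> b)}"

lemma n_pos: "n > 0" using B.ord_ge_1[OF finB y] by simp

lemma y_n: "y [^]\<^bsub>B\<^esub> n = \<one>\<^bsub>B\<^esub>" by (simp add: y)

lemma ysuc: "b \<in> carrier B \<Longrightarrow> y [^]\<^bsub>B\<^esub> Suc s \<otimes>\<^bsub>B\<^esub> b = y \<otimes>\<^bsub>B\<^esub> (y [^]\<^bsub>B\<^esub> s \<otimes>\<^bsub>B\<^esub> b)"
  by (subst B.nat_pow_Suc2[OF y]) (simp add: B.m_assoc y)

lemma closed_pow: "closed V \<Longrightarrow> b \<in> V \<Longrightarrow> y [^]\<^bsub>B\<^esub> (s::nat) \<otimes>\<^bsub>B\<^esub> b \<in> V"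
proof (induction s)
  case 0
  then show ?case unfolding closed_def by auto
next
  case (Suc s)
  have b: "b \<in> carrier B" using Suc.prems unfolding closed_def by auto
  have "y [^]\<^bsub>B\<^esub> Suc s \<otimes>\<^bsub>B\<^esub> b = y \<otimes>\<^bsub>B\<^esub> (y [^]\<^bsub>B\<^esub> s \<otimes>\<^bsub>B\<^esub> b)"
    using b by (rule ysuc)
  then show ?case using Suc unfolding closed_def by auto
qed

lemma pow_mod: "y [^]\<^bsub>B\<^esub> (k::nat) = y [^]\<^bsub>B\<^esub> (k mod n)"
proof -
  have "y [^]\<^bsub>B\<^esub> k = y [^]\<^bsub>B\<^esub> (k mod n + n * (k div n))" by simp
  also have "\<dots> = y [^]\<^bsub>B\<^esub> (k mod n) \<otimes>\<^bsub>B\<^esub> (y [^]\<^bsub>B\<^esub> n) [^]\<^bsub>B\<^esub> (k div n)"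
    by (simp only: B.nat_pow_mult[OF y, symmetric] B.nat_pow_pow[OF y])
  also have "\<dots> = y [^]\<^bsub>B\<^esub> (k mod n)" using y by simp
  finally show ?thesis .
qed

lemma bet_cong: "(\<And>s. s < n \<Longrightarrow> \<alpha> (y [^]\<^bsub>B\<^esub> s \<otimes>\<^bsub>B\<^esub> b) = \<alpha>' (y [^]\<^bsub>B\<^esub> s \<otimes>\<^bsub>B\<^esub> b)) \<Longrightarrow> bet \<alpha> b = bet \<alpha>' b"
  unfolding bet_def by (rule A.sp_cong) auto

lemma bet_closed: "closed V \<Longrightarrow> (\<And>c. c \<in> V \<Longrightarrow> \<alpha> c \<in> carrier A) \<Longrightarrow> b \<in> V \<Longrightarrow> bet \<alpha> b \<in> carrier A"
  unfolding bet_def by (rule A.sp_closed) (auto intro: closed_pow)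

lemma bet_conj:
  assumes V: "closed V" and al: "\<And>c. c \<in> V \<Longrightarrow> \<alpha> c \<in> carrier A" and b: "b \<in> V"
  shows "bet \<alpha> (y \<otimes>\<^bsub>B\<^esub> b) = inv\<^bsub>A\<^esub> (\<alpha> b) \<otimes>\<^bsub>A\<^esub> bet \<alpha> b \<otimes>\<^bsub>A\<^esub> \<alpha> b"
proof -
  define f where "f s = \<alpha> (y [^]\<^bsub>B\<^esub> s \<otimes>\<^bsub>B\<^esub> b)" for s :: nat
  have bB: "b \<in> carrier B" using V b unfolding closed_def by auto
  have fc: "\<And>s. f s \<in> carrier A" unfolding f_def using V b al closed_pow by blast
  have ybV: "y \<otimes>\<^bsub>B\<^esub> b \<in> V" using V b unfolding closed_def by auto
  have "sp A f (1 + n) = sp A f 1 \<otimes>\<^bsub>A\<^esub> sp A (\<lambda>s. f (1 + s)) n"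
    by (rule A.sp_add) (use fc in auto)
  also have "sp A f 1 = \<alpha> b" using fc[of 0] bB by (simp add: f_def)
  also have "(\<lambda>s. f (1 + s)) = (\<lambda>s. \<alpha> (y [^]\<^bsub>B\<^esub> s \<otimes>\<^bsub>B\<^esub> (y \<otimes>\<^bsub>B\<^esub> b)))"
    using y bB by (auto simp: f_def B.m_assoc intro!: ext)
  also have "sp A \<dots> n = bet \<alpha> (y \<otimes>\<^bsub>B\<^esub> b)" by (simp add: bet_def)
  finally have e1: "sp A f (Suc n) = \<alpha> b \<otimes>\<^bsub>A\<^esub> bet \<alpha> (y \<otimes>\<^bsub>B\<^esub> b)" by simp
  have "sp A f (Suc n) = bet \<alpha> b \<otimes>\<^bsub>A\<^esub> \<alpha> b"
    using bB by (simp add: f_def[abs_def] bet_def y_n)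
  with e1 have eq: "\<alpha> b \<otimes>\<^bsub>A\<^esub> bet \<alpha> (y \<otimes>\<^bsub>B\<^esub> b) = bet \<alpha> b \<otimes>\<^bsub>A\<^esub> \<alpha> b" by simp
  have c1: "bet \<alpha> (y \<otimes>\<^bsub>B\<^esub> b) \<in> carrier A" using bet_closed[OF V al ybV] .
  have c2: "bet \<alpha> b \<in> carrier A" using bet_closed[OF V al b] .
  have ab: "\<alpha> b \<in> carrier A" using al b .
  have "bet \<alpha> (y \<otimes>\<^bsub>B\<^esub> b) = inv\<^bsub>A\<^esub> (\<alpha> b) \<otimes>\<^bsub>A\<^esub> (\<alpha> b \<otimes>\<^bsub>A\<^esub> bet \<alpha> (y \<otimes>\<^bsub>B\<^esub> b))"
    using c1 ab by (simp add: A.m_assoc[symmetric])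
  also have "\<dots> = inv\<^bsub>A\<^esub> (\<alpha> b) \<otimes>\<^bsub>A\<^esub> (bet \<alpha> b \<otimes>\<^bsub>A\<^esub> \<alpha> b)"
    by (simp only: eq)
  also have "\<dots> = inv\<^bsub>A\<^esub> (\<alpha> b) \<otimes>\<^bsub>A\<^esub> bet \<alpha> b \<otimes>\<^bsub>A\<^esub> \<alpha> b"
    using c2 ab by (simp add: A.m_assoc)
  finally show ?thesis .
qed

lemma P_orbit:
  assumes V: "closed V" and al: "\<And>c. c \<in> V \<Longrightarrow> \<alpha> c \<in> carrier A" and b: "b \<in> V"
  shows "P (bet \<alpha> (y [^]\<^bsub>B\<^esub> (s::nat) \<otimes>\<^bsub>B\<^esub> b)) = P (bet \<alpha> b)"
proof (induction s)
  case 0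
  then show ?case using V b unfolding closed_def by auto
next
  case (Suc s)
  have bB: "b \<in> carrier B" using V b unfolding closed_def by auto
  have V1: "y [^]\<^bsub>B\<^esub> s \<otimes>\<^bsub>B\<^esub> b \<in> V" using closed_pow[OF V b] .
  have e: "y [^]\<^bsub>B\<^esub> Suc s \<otimes>\<^bsub>B\<^esub> b = y \<otimes>\<^bsub>B\<^esub> (y [^]\<^bsub>B\<^esub> s \<otimes>\<^bsub>B\<^esub> b)"
    using bB by (rule ysuc)
  have h: "bet \<alpha> (y [^]\<^bsub>B\<^esub> Suc s \<otimes>\<^bsub>B\<^esub> b) = inv\<^bsub>A\<^esub> (\<alpha> (y [^]\<^bsub>B\<^esub> s \<otimes>\<^bsub>B\<^esub> b)) \<otimes>\<^bsub>A\<^esub> bet \<alpha> (y [^]\<^bsub>B\<^esub> s \<otimes>\<^bsub>B\<^esub> b) \<otimes>\<^bsub>A\<^esub> \<alpha> (y [^]\<^bsub>B\<^esub> s \<otimes>\<^bsub>B\<^esub> b)"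
    unfolding e by (rule bet_conj[OF V al V1])
  have "P (bet \<alpha> (y [^]\<^bsub>B\<^esub> Suc s \<otimes>\<^bsub>B\<^esub> b)) = P (bet \<alpha> (y [^]\<^bsub>B\<^esub> s \<otimes>\<^bsub>B\<^esub> b))"
    by (simp only: h Pconj[OF al[OF V1] bet_closed[OF V al V1]])
  then show ?case using Suc by simp
qed

end

context wr begin

lemma orb_inj: "t \<in> carrier B \<Longrightarrow> inj_on (\<lambda>s. y [^]\<^bsub>B\<^esub> s \<otimes>\<^bsub>B\<^esub> t) {..<n}"
proof (rule inj_onI)
  fix s r assume t: "t \<in> carrier B" and s: "s \<in> {..<n}" and r: "r \<in> {..<n}"
    and eq: "y [^]\<^bsub>B\<^esub> s \<otimes>\<^bsub>B\<^esub> t = y [^]\<^bsub>B\<^esub> r \<otimes>\<^bsub>B\<^esub> t"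
  from eq t y have "y [^]\<^bsub>B\<^esub> s = y [^]\<^bsub>B\<^esub> r" by simp
  moreover have "inj_on (\<lambda>x. y [^]\<^bsub>B\<^esub> x) {0..n - 1}" by (rule B.ord_inj[OF y])
  moreover have "s \<in> {0..n - 1}" "r \<in> {0..n - 1}" using s r n_pos by auto
  ultimately show "s = r" by (auto simp: inj_on_def)
qed

lemma card_orb: "t \<in> carrier B \<Longrightarrow> card (orb t) = n"
  unfolding orb_def by (simp add: card_image orb_inj)

lemma t_in_orb: "t \<in> carrier B \<Longrightarrow> t \<in> orb t"
  unfolding orb_def using n_pos
  by (auto intro!: image_eqI[where x = 0])

lemma orb_closed: assumes t: "t \<in> carrier B" shows "closed (orb t)"
  unfolding closed_def
proof (intro conjI ballI)
  show "orb t \<subseteq> carrier B" unfolding orb_def using t y by auto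
next
  fix b assume "b \<in> orb t"
  then obtain s where s: "s < n" and b: "b = y [^]\<^bsub>B\<^esub> s \<otimes>\<^bsub>B\<^esub> t" unfolding orb_def by auto
  have "y \<otimes>\<^bsub>B\<^esub> b = y [^]\<^bsub>B\<^esub> Suc s \<otimes>\<^bsub>B\<^esub> t" using ysuc[OF t] b by simp
  also have "\<dots> = y [^]\<^bsub>B\<^esub> (Suc s mod n) \<otimes>\<^bsub>B\<^esub> t" using pow_mod by metis
  finally show "y \<otimes>\<^bsub>B\<^esub> b \<in> orb t" unfolding orb_def using n_pos by auto
qed

lemma orb_sub: "closed V \<Longrightarrow> t \<in> V \<Longrightarrow> orb t \<subseteq> V"
  unfolding orb_def using closed_pow by auto

lemma diff_closed: assumes V: "closed V" and t: "t \<in> V" shows "closed (V - orb t)"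
  unfolding closed_def
proof (intro conjI ballI)
  show "V - orb t \<subseteq> carrier B" using V unfolding closed_def by auto
next
  fix b assume b: "b \<in> V - orb t"
  have bB: "b \<in> carrier B" and tB: "t \<in> carrier B" using V b t unfolding closed_def by auto
  have ybV: "y \<otimes>\<^bsub>B\<^esub> b \<in> V" using V b unfolding closed_def by auto
  show "y \<otimes>\<^bsub>B\<^esub> b \<in> V - orb t"
  proof (rule ccontr)
    assume "y \<otimes>\<^bsub>B\<^esub> b \<notin> V - orb t"
    with ybV have "y \<otimes>\<^bsub>B\<^esub> b \<in> orb t" by auto
    then obtain s where s: "s < n" and e: "y \<otimes>\<^bsub>B\<^esub> b = y [^]\<^bsub>B\<^esub> s \<otimes>\<^bsub>B\<^esub> t" unfolding orb_def by auto
    have "b = y [^]\<^bsub>B\<^esub> n \<otimes>\<^bsub>B\<^esub> b" using bB y by simp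
    also have "\<dots> = y [^]\<^bsub>B\<^esub> Suc (n - 1) \<otimes>\<^bsub>B\<^esub> b" using n_pos by simp
    also have "\<dots> = y [^]\<^bsub>B\<^esub> (n - 1) \<otimes>\<^bsub>B\<^esub> (y \<otimes>\<^bsub>B\<^esub> b)"
      using bB y by (simp add: B.m_assoc)
    also have "\<dots> = y [^]\<^bsub>B\<^esub> (n - 1) \<otimes>\<^bsub>B\<^esub> (y [^]\<^bsub>B\<^esub> s \<otimes>\<^bsub>B\<^esub> t)" by (simp only: e)
    also have "\<dots> = y [^]\<^bsub>B\<^esub> (n - 1 + s) \<otimes>\<^bsub>B\<^esub> t"
      using tB y by (simp add: B.m_assoc[symmetric] B.nat_pow_mult)
    also have "\<dots> = y [^]\<^bsub>B\<^esub> ((n - 1 + s) mod n) \<otimes>\<^bsub>B\<^esub> t" using pow_mod by metis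
    finally have "b \<in> orb t" unfolding orb_def using n_pos by auto
    with b show False by auto
  qed
qed

lemma bet_restrict: "closed V \<Longrightarrow> b \<in> V \<Longrightarrow> bet (restrict \<alpha> V) b = bet \<alpha> b"
  by (rule bet_cong) (simp add: closed_pow)

end

context wr begin

lemma GG_split:
  assumes V1: "closed V1" and V2: "closed V2" and disj: "V1 \<inter> V2 = {}"
  shows "card (GG (V1 \<union> V2)) = card (GG V1) * card (GG V2)"
proof -
  define F where "F \<alpha> = (restrict \<alpha> V1, restrict \<alpha> V2)" for \<alpha> :: "'b \<Rightarrow> 'a"
  define H where "H z = (\<lambda>b. if b \<in> V1 then fst z b else snd z b)" for z :: "('b \<Rightarrow> 'a) \<times> ('b \<Rightarrow> 'a)"
  have m1: "bet (H z) b = bet (fst z) b" if "b \<in> V1" for z b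
    unfolding H_def by (rule bet_cong) (use closed_pow[OF V1 that] in auto)
  have m2: "bet (H z) b = bet (snd z) b" if "b \<in> V2" for z b
    unfolding H_def by (rule bet_cong) (use closed_pow[OF V2 that] disj in auto)
  have "bij_betw F (GG (V1 \<union> V2)) (GG V1 \<times> GG V2)"
  proof (rule bij_betw_byWitness[where f' = H])
    show "\<forall>a\<in>GG (V1 \<union> V2). H (F a) = a"
      by (auto simp: GG_def H_def F_def PiE_iff extensional_def fun_eq_iff)
    show "\<forall>a'\<in>GG V1 \<times> GG V2. F (H a') = a'"
      using disj by (auto simp: GG_def H_def F_def PiE_iff extensional_def fun_eq_iff)
    show "F ` GG (V1 \<union> V2) \<subseteq> GG V1 \<times> GG V2"
      by (auto simp: GG_def F_def bet_restrict[OF V1] bet_restrict[OF V2])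
    show "H ` (GG V1 \<times> GG V2) \<subseteq> GG (V1 \<union> V2)"
    proof
      fix u assume "u \<in> H ` (GG V1 \<times> GG V2)"
      then obtain z where z: "z \<in> GG V1 \<times> GG V2" and u: "u = H z" by auto
      show "u \<in> GG (V1 \<union> V2)"
        unfolding GG_def
      proof (intro CollectI conjI ballI)
        show "u \<in> V1 \<union> V2 \<rightarrow>\<^sub>E carrier A"
          using z disj by (auto simp: u H_def GG_def PiE_iff extensional_def)
        fix b assume "b \<in> V1 \<union> V2"
        then show "P (bet u b)"
          using z m1 m2 by (auto simp: u GG_def)
      qed
    qed
  qed
  then have "card (GG (V1 \<union> V2)) = card (GG V1 \<times> GG V2)" by (rule bij_betw_same_card)
  then show ?thesis by (simp add: card_cartesian_product)
qed

lemma transl_card: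
  assumes c: "c \<in> carrier A" and S: "S' \<subseteq> carrier A"
  shows "card {a \<in> carrier A. c \<otimes>\<^bsub>A\<^esub> a \<in> S'} = card S'"
proof -
  have inj: "inj_on (\<lambda>a. c \<otimes>\<^bsub>A\<^esub> a) {a \<in> carrier A. c \<otimes>\<^bsub>A\<^esub> a \<in> S'}"
    using c by (auto simp: inj_on_def)
  have "(\<lambda>a. c \<otimes>\<^bsub>A\<^esub> a) ` {a \<in> carrier A. c \<otimes>\<^bsub>A\<^esub> a \<in> S'} = S'"
  proof
    show "S' \<subseteq> (\<lambda>a. c \<otimes>\<^bsub>A\<^esub> a) ` {a \<in> carrier A. c \<otimes>\<^bsub>A\<^esub> a \<in> S'}"
    proof
      fix s assume s: "s \<in> S'"
      then have sA: "s \<in> carrier A" using S by auto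
      have e: "c \<otimes>\<^bsub>A\<^esub> (inv\<^bsub>A\<^esub> c \<otimes>\<^bsub>A\<^esub> s) = s" using c sA by (simp add: A.m_assoc[symmetric])
      show "s \<in> (\<lambda>a. c \<otimes>\<^bsub>A\<^esub> a) ` {a \<in> carrier A. c \<otimes>\<^bsub>A\<^esub> a \<in> S'}"
        by (rule image_eqI[where x = "inv\<^bsub>A\<^esub> c \<otimes>\<^bsub>A\<^esub> s"]) (use e s c sA in auto)
    qed
  qed auto
  with inj show ?thesis by (metis card_image)
qed

end

context wr begin

lemma seq_count:
  assumes S: "S' \<subseteq> carrier A"
  shows "card {f \<in> {..<Suc m} \<rightarrow>\<^sub>E carrier A. sp A f (Suc m) \<in> S'} = card S' * card (carrier A) ^ m"
proof -
  define L where "L = {f \<in> {..<Suc m} \<rightarrow>\<^sub>E carrier A. sp A f (Suc m) \<in> S'}"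
  define R where "R = (SIGMA g:({..<m} \<rightarrow>\<^sub>E carrier A). {a \<in> carrier A. sp A g m \<otimes>\<^bsub>A\<^esub> a \<in> S'})"
  have spr: "sp A (restrict f {..<m}) m = sp A f m" for f :: "nat \<Rightarrow> 'a"
    by (rule A.sp_cong) auto
  have spu: "sp A (g(m := a)) m = sp A g m" for g a
    by (rule A.sp_cong) auto
  have "bij_betw (\<lambda>f. (restrict f {..<m}, f m)) L R"
  proof (rule bij_betw_byWitness[where f' = "\<lambda>(g, a). g(m := a)"])
    show "\<forall>f\<in>L. (\<lambda>(g, a). g(m := a)) (restrict f {..<m}, f m) = f"
      by (auto simp: L_def PiE_iff extensional_def fun_eq_iff)
    show "\<forall>z\<in>R. (\<lambda>f. (restrict f {..<m}, f m)) ((\<lambda>(g, a). g(m := a)) z) = z"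
      by (auto simp: R_def PiE_iff extensional_def fun_eq_iff)
    show "(\<lambda>f. (restrict f {..<m}, f m)) ` L \<subseteq> R"
    proof
      fix z assume "z \<in> (\<lambda>f. (restrict f {..<m}, f m)) ` L"
      then obtain f where f: "f \<in> L" and z: "z = (restrict f {..<m}, f m)" by auto
      have fA: "\<And>i. i < Suc m \<Longrightarrow> f i \<in> carrier A" and sf: "sp A f m \<otimes>\<^bsub>A\<^esub> f m \<in> S'"
        using f by (auto simp: L_def PiE_iff)
      have r1: "restrict f {..<m} \<in> {..<m} \<rightarrow>\<^sub>E carrier A" using fA by auto
      have r2: "f m \<in> {a \<in> carrier A. sp A (restrict f {..<m}) m \<otimes>\<^bsub>A\<^esub> a \<in> S'}"
        using sf fA[of m] unfolding spr by simp
      show "z \<in> R" unfolding R_def z using r1 r2 by blast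
    qed
    show "(\<lambda>(g, a). g(m := a)) ` R \<subseteq> L"
    proof
      fix z assume "z \<in> (\<lambda>(g, a). g(m := a)) ` R"
      then obtain g a where ga: "(g, a) \<in> R" and z: "z = g(m := a)" by auto
      have g: "g \<in> {..<m} \<rightarrow>\<^sub>E carrier A" and a: "a \<in> carrier A" and s: "sp A g m \<otimes>\<^bsub>A\<^esub> a \<in> S'"
        using ga by (auto simp: R_def)
      have z1: "z \<in> {..<Suc m} \<rightarrow>\<^sub>E carrier A"
      proof (rule PiE_I)
        fix i assume i: "i \<in> {..<Suc m}" show "z i \<in> carrier A"
        proof (cases "i = m")
          case True then show ?thesis using a z by simp
        next
          case False then have "i \<in> {..<m}" using i by auto
          then show ?thesis using PiE_mem[OF g] False z by simp
        qed
      next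
        fix i assume i: "i \<notin> {..<Suc m}"
        then have "i \<notin> {..<m}" "i \<noteq> m" by auto
        then show "z i = undefined" using PiE_arb[OF g] z by simp
      qed
      have "sp A z (Suc m) = sp A g m \<otimes>\<^bsub>A\<^esub> a" by (simp add: z spu)
      with z1 s show "z \<in> L" by (simp add: L_def)
    qed
  qed
  then have "card L = card R" by (rule bij_betw_same_card)
  also have "card R = (\<Sum>g\<in>{..<m} \<rightarrow>\<^sub>E carrier A. card {a \<in> carrier A. sp A g m \<otimes>\<^bsub>A\<^esub> a \<in> S'})"
    unfolding R_def
  proof (rule card_SigmaI)
    show "finite ({..<m} \<rightarrow>\<^sub>E carrier A)" by (rule finite_PiE) (simp_all add: finA)
    show "\<forall>g\<in>{..<m} \<rightarrow>\<^sub>E carrier A. finite {a \<in> carrier A. sp A g m \<otimes>\<^bsub>A\<^esub> a \<in> S'}"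
      using finA by simp
  qed
  also have "\<dots> = (\<Sum>g\<in>{..<m} \<rightarrow>\<^sub>E carrier A. card S')"
  proof (rule sum.cong)
    fix g assume "g \<in> {..<m} \<rightarrow>\<^sub>E carrier A"
    then have "sp A g m \<in> carrier A" by (intro A.sp_closed) auto
    then show "card {a \<in> carrier A. sp A g m \<otimes>\<^bsub>A\<^esub> a \<in> S'} = card S'" by (rule transl_card[OF _ S])
  qed simp
  also have "\<dots> = card S' * card (carrier A) ^ m"
    by (simp add: card_PiE)
  finally show ?thesis unfolding L_def .
qed

end

context wr begin

lemma orb_count:
  assumes t: "t \<in> carrier B"
  shows "card (GG (orb t)) = card {a \<in> carrier A. P a} * card (carrier A) ^ (n - 1)"
proof -
  define h where "h s = y [^]\<^bsub>B\<^esub> s \<otimes>\<^bsub>B\<^esub> t" for s :: nat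
  define Ob where "Ob = orb t"
  define S where "S = {a \<in> carrier A. P a}"
  have O_h: "Ob = h ` {..<n}" by (simp add: Ob_def orb_def h_def[abs_def])
  have inj: "inj_on h {..<n}" using orb_inj[OF t] by (simp add: h_def[abs_def])
  have cl: "closed Ob" using orb_closed[OF t] by (simp add: Ob_def)
  have tO: "t \<in> Ob" using t_in_orb[OF t] by (simp add: Ob_def)
  have hO: "s < n \<Longrightarrow> h s \<in> Ob" for s using O_h by auto
  have betH: "bet \<alpha> t = sp A (\<lambda>s. \<alpha> (h s)) n" for \<alpha> by (simp add: bet_def h_def)
  define D where "D = {\<alpha> \<in> Ob \<rightarrow>\<^sub>E carrier A. P (bet \<alpha> t)}"
  define C where "C = {f \<in> {..<n} \<rightarrow>\<^sub>E carrier A. sp A f n \<in> S}"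
  have GG_eq: "GG Ob = D"
  proof -
    have "(\<forall>b\<in>Ob. P (bet \<alpha> b)) \<longleftrightarrow> P (bet \<alpha> t)" if al: "\<alpha> \<in> Ob \<rightarrow>\<^sub>E carrier A" for \<alpha>
    proof
      assume "\<forall>b\<in>Ob. P (bet \<alpha> b)" then show "P (bet \<alpha> t)" using tO by auto
    next
      assume Pt: "P (bet \<alpha> t)"
      show "\<forall>b\<in>Ob. P (bet \<alpha> b)"
      proof
        fix b assume "b \<in> Ob"
        then obtain s :: nat where b: "b = y [^]\<^bsub>B\<^esub> s \<otimes>\<^bsub>B\<^esub> t" using O_h h_def by auto
        have "P (bet \<alpha> (y [^]\<^bsub>B\<^esub> s \<otimes>\<^bsub>B\<^esub> t)) = P (bet \<alpha> t)"
          by (rule P_orbit[OF cl _ tO]) (use al in auto)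
        then show "P (bet \<alpha> b)" using Pt b by simp
      qed
    qed
    then show ?thesis unfolding GG_def D_def by blast
  qed
  define F where "F \<alpha> = restrict (\<lambda>s. \<alpha> (h s)) {..<n}" for \<alpha> :: "'b \<Rightarrow> 'a"
  define F' where "F' f = restrict (\<lambda>b. f (the_inv_into {..<n} h b)) Ob" for f :: "nat \<Rightarrow> 'a"
  have spF: "sp A (F \<alpha>) n = bet \<alpha> t" for \<alpha>
    unfolding betH F_def by (rule A.sp_cong) auto
  have F'h: "F' f (h s) = f s" if "s < n" for f s
    using hO[OF that] that inj by (simp add: F'_def the_inv_into_f_f)
  have "bij_betw F D C"
  proof (rule bij_betw_byWitness[where f' = F'])
    show "\<forall>\<alpha>\<in>D. F' (F \<alpha>) = \<alpha>"
    proof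
      fix \<alpha> assume "\<alpha> \<in> D"
      then have al: "\<alpha> \<in> Ob \<rightarrow>\<^sub>E carrier A" by (simp add: D_def)
      show "F' (F \<alpha>) = \<alpha>"
      proof
        fix b show "F' (F \<alpha>) b = \<alpha> b"
        proof (cases "b \<in> Ob")
          case True
          then obtain s where s: "s < n" and b: "b = h s" using O_h by auto
          show ?thesis using s inj hO[OF s] by (simp add: b F'_def F_def the_inv_into_f_f)
        next
          case False then show ?thesis using PiE_arb[OF al False] by (simp add: F'_def)
        qed
      qed
    qed
    show "\<forall>f\<in>C. F (F' f) = f"
    proof
      fix f assume "f \<in> C"
      then have f: "f \<in> {..<n} \<rightarrow>\<^sub>E carrier A" by (simp add: C_def)
      show "F (F' f) = f"
      proof
        fix s show "F (F' f) s = f s"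
        proof (cases "s < n")
          case True then show ?thesis using F'h by (simp add: F_def)
        next
          case False then have "s \<notin> {..<n}" by simp
          then show ?thesis using PiE_arb[OF f] by (simp add: F_def)
        qed
      qed
    qed
    show "F ` D \<subseteq> C"
    proof
      fix z assume "z \<in> F ` D"
      then obtain \<alpha> where a: "\<alpha> \<in> D" and z: "z = F \<alpha>" by auto
      have al: "\<alpha> \<in> Ob \<rightarrow>\<^sub>E carrier A" and Pa: "P (bet \<alpha> t)" using a by (auto simp: D_def)
      have z1: "z \<in> {..<n} \<rightarrow>\<^sub>E carrier A"
        unfolding z F_def using PiE_mem[OF al] hO by (simp add: restrict_PiE_iff)
      have "bet \<alpha> t \<in> carrier A" by (rule bet_closed[OF cl _ tO]) (use PiE_mem[OF al] in auto)
      then have "sp A z n \<in> S" using Pa spF z by (simp add: S_def)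
      with z1 show "z \<in> C" by (simp add: C_def)
    qed
    show "F' ` C \<subseteq> D"
    proof
      fix z assume "z \<in> F' ` C"
      then obtain f where fC: "f \<in> C" and z: "z = F' f" by auto
      have f: "f \<in> {..<n} \<rightarrow>\<^sub>E carrier A" and sf: "sp A f n \<in> S" using fC by (auto simp: C_def)
      have z1: "z \<in> Ob \<rightarrow>\<^sub>E carrier A"
        unfolding z F'_def
      proof (rule restrict_PiE_iff[THEN iffD2], intro ballI)
        fix b assume "b \<in> Ob"
        then have "the_inv_into {..<n} h b \<in> {..<n}"
          using O_h inj by (auto simp: the_inv_into_f_f)
        then show "f (the_inv_into {..<n} h b) \<in> carrier A" using PiE_mem[OF f] by simp
      qed
      have "bet z t = sp A (F z) n" using spF by simp
      also have "sp A (F z) n = sp A f n"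
        by (rule A.sp_cong) (simp add: F_def z F'h)
      finally have "P (bet z t)" using sf by (simp add: S_def)
      with z1 show "z \<in> D" by (simp add: D_def)
    qed
  qed
  then have "card D = card C" by (rule bij_betw_same_card)
  also have "C = {f \<in> {..<Suc (n - 1)} \<rightarrow>\<^sub>E carrier A. sp A f (Suc (n - 1)) \<in> S}"
    using n_pos by (simp add: C_def)
  also have "card \<dots> = card S * card (carrier A) ^ (n - 1)"
    by (rule seq_count) (simp add: S_def)
  finally show ?thesis using GG_eq by (simp add: Ob_def S_def)
qed

lemma main_count:
  "closed U \<Longrightarrow> \<exists>q. card U = q * n \<and>
     card (GG U) = (card {a \<in> carrier A. P a} * card (carrier A) ^ (n - 1)) ^ q"
proof (induction "card U" arbitrary: U rule: less_induct)
  case less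
  have finU: "finite U" using less.prems finB unfolding closed_def by (auto intro: finite_subset)
  show ?case
  proof (cases "U = {}")
    case True
    have "GG U = {\<lambda>_. undefined}" by (simp add: True GG_def)
    then show ?thesis by (intro exI[of _ 0]) (simp add: True)
  next
    case False
    then obtain t where t: "t \<in> U" by auto
    have tB: "t \<in> carrier B" using less.prems t unfolding closed_def by auto
    define U' where "U' = U - orb t"
    have cl': "closed U'" unfolding U'_def by (rule diff_closed[OF less.prems t])
    have "U' \<subset> U" using t t_in_orb[OF tB] unfolding U'_def by auto
    with finU have lt: "card U' < card U" by (rule psubset_card_mono)
    obtain q' where q1: "card U' = q' * n"
      and q2: "card (GG U') = (card {a \<in> carrier A. P a} * card (carrier A) ^ (n - 1)) ^ q'"
      using less.hyps[OF lt cl'] by blast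
    have Ueq: "U = orb t \<union> U'" using orb_sub[OF less.prems t] unfolding U'_def by auto
    have disj: "orb t \<inter> U' = {}" unfolding U'_def by auto
    have "card U = card (orb t) + card U'"
      using finU Ueq disj by (metis card_Un_disjoint finite_Un)
    then have c1: "card U = Suc q' * n" using q1 card_orb[OF tB] by simp
    have "card (GG U) = card (GG (orb t)) * card (GG U')"
      using GG_split[OF orb_closed[OF tB] cl' disj] Ueq by simp
    then have c2: "card (GG U) = (card {a \<in> carrier A. P a} * card (carrier A) ^ (n - 1)) ^ Suc q'"
      using q2 orb_count[OF tB] by simp
    from c1 c2 show ?thesis by blast
  qed
qed

end

lemma pdvd: "Factorial_Ring.prime (p::nat) \<Longrightarrow> (p ^ m dvd p ^ n \<longleftrightarrow> m \<le> n)"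
  by (simp add: dvd_power_iff_le prime_ge_2_nat)

lemma thr_real:
  fixes p u f :: nat and k :: int
  assumes p: "Factorial_Ring.prime p"
  shows "(real (p ^ u) \<le> real (p ^ f) * real p powi (- k)) \<longleftrightarrow> (k \<le> int f \<and> u \<le> nat (int f - k))"
proof -
  define x where "x = real p"
  have x1: "x > 1" using prime_gt_1_nat[OF p] by (simp add: x_def)
  have pnz: "real p \<noteq> 0" using x1 x_def by simp
  have e: "real (p ^ f) * real p powi (- k) = x powi (int f - k)"
    unfolding x_def using power_int_add[of "real p" "int f" "-k"] pnz by simp
  show ?thesis
  proof (cases "k \<le> int f")
    case True
    then have pw: "x powi (int f - k) = x ^ nat (int f - k)" by (simp add: power_int_def)
    have L: "real (p ^ u) = x ^ u" by (simp add: x_def)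
    have "(real (p ^ u) \<le> real (p ^ f) * real p powi (- k)) = (x ^ u \<le> x ^ nat (int f - k))"
      by (simp only: L e pw)
    also have "\<dots> = (u \<le> nat (int f - k))" using x1 by (rule power_increasing_iff)
    finally show ?thesis using True by simp
  next
    case False
    have "x powi (int f - k) = inverse x ^ nat (k - int f)" using False by (simp add: power_int_def)
    also have "\<dots> < 1"
    proof -
      have m: "nat (k - int f) \<noteq> 0" using False by simp
      have "inverse x ^ nat (k - int f) = inverse (x ^ nat (k - int f))" by (rule power_inverse)
      moreover have "1 < x ^ nat (k - int f)" using x1 m by (simp add: one_less_power)
      ultimately show ?thesis by (simp add: inverse_less_1_iff)
    qed
    also have "1 \<le> x ^ u" using x1 by simp
    finally have "\<not> real (p ^ u) \<le> real (p ^ f) * real p powi (- k)" using e by (simp add: x_def)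
    then show ?thesis using False by simp
  qed
qed

lemma ord_ppow:
  assumes G: "group G" and fin: "finite (carrier G)" and c: "card (carrier G) = p ^ c"
    and p: "Factorial_Ring.prime p" and x: "x \<in> carrier G"
  shows "\<exists>u. group.ord G x = p ^ u"
proof -
  have "group.ord G x dvd p ^ c"
    using group.ord_dvd_group_order[OF G x] c by (simp add: order_def)
  then show ?thesis using divides_primepow_nat[OF p] by blast
qed

lemma pgroup_facts:
  assumes G: "group G" and fin: "finite (carrier G)" and c: "card (carrier G) = p ^ c"
    and p: "Factorial_Ring.prime p" and mx: "max_elem_ord G = p ^ f"
  shows "\<And>x. x \<in> carrier G \<Longrightarrow> group.ord G x dvd p ^ f"
    and "\<exists>x\<in>carrier G. group.ord G x = p ^ f"
    and "f \<le> c"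
proof -
  interpret G: group G by fact
  have ne: "carrier G \<noteq> {}" by auto
  have "Max (G.ord ` carrier G) \<in> G.ord ` carrier G" by (rule Max_in) (use fin ne in auto)
  then show "\<exists>x\<in>carrier G. G.ord x = p ^ f"
    using mx by (auto simp: max_elem_ord_def)
  then obtain x0 where x0: "x0 \<in> carrier G" "G.ord x0 = p ^ f" by blast
  have "p ^ f dvd order G" using G.ord_dvd_group_order[OF x0(1)] x0(2) by simp
  then have "p ^ f dvd p ^ c" using c by (simp add: order_def)
  then show "f \<le> c" using p by (simp add: pdvd)
  fix x assume x: "x \<in> carrier G"
  obtain u where u: "G.ord x = p ^ u" using ord_ppow[OF G fin c p x] by blast
  have "G.ord x \<le> Max (G.ord ` carrier G)" by (rule Max_ge) (use fin x in auto)
  then have "G.ord x \<le> p ^ f" using mx by (simp add: max_elem_ord_def)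
  then have "p ^ u \<le> p ^ f" using u by simp
  then have "u \<le> f" by (rule power_le_imp_le_exp[OF prime_gt_1_nat[OF p]])
  then show "G.ord x dvd p ^ f" using u by (simp add: le_imp_power_dvd)
qed

lemma r_ratio_eq:
  assumes G: "group G" and fin: "finite (carrier G)" and c: "card (carrier G) = p ^ c"
    and p: "Factorial_Ring.prime p" and mx: "max_elem_ord G = p ^ f"
  shows "r_ratio p G k = real (card {x \<in> carrier G. k \<le> int f \<and> x [^]\<^bsub>G\<^esub> (p ^ nat (int f - k)) = \<one>\<^bsub>G\<^esub>})
            / real (card (carrier G))"
proof -
  interpret G: group G by fact
  have "{x \<in> carrier G. real (G.ord x) \<le> real (max_elem_ord G) * real p powi - k}
      = {x \<in> carrier G. k \<le> int f \<and> x [^]\<^bsub>G\<^esub> (p ^ nat (int f - k)) = \<one>\<^bsub>G\<^esub>}"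
  proof (intro Collect_cong conj_cong refl)
    fix x assume x: "x \<in> carrier G"
    obtain u where u: "G.ord x = p ^ u" using ord_ppow[OF G fin c p x] by blast
    have "real (G.ord x) \<le> real (max_elem_ord G) * real p powi - k \<longleftrightarrow> (k \<le> int f \<and> u \<le> nat (int f - k))"
      using thr_real[OF p, of u f k] u mx by simp
    also have "\<dots> \<longleftrightarrow> (k \<le> int f \<and> x [^]\<^bsub>G\<^esub> (p ^ nat (int f - k)) = \<one>\<^bsub>G\<^esub>)"
    proof -
      have "x [^]\<^bsub>G\<^esub> (p ^ nat (int f - k)) = \<one>\<^bsub>G\<^esub> \<longleftrightarrow> p ^ u dvd p ^ nat (int f - k)"
        using G.pow_eq_id[OF x] u by simp
      also have "\<dots> \<longleftrightarrow> u \<le> nat (int f - k)" by (rule pdvd[OF p])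
      finally show ?thesis by simp
    qed
    finally show "real (G.ord x) \<le> real (max_elem_ord G) * real p powi - k \<longleftrightarrow>
        (k \<le> int f \<and> x [^]\<^bsub>G\<^esub> (p ^ nat (int f - k)) = \<one>\<^bsub>G\<^esub>)" .
  qed
  then show ?thesis by (simp add: r_ratio_def)
qed

lemma (in group) sp_single:
  assumes "\<And>s. 0 < s \<Longrightarrow> s < n \<Longrightarrow> f s = \<one>" "f 0 \<in> carrier G" "0 < n"
  shows "sp G f n = f 0"
proof -
  have "0 < k \<longrightarrow> k \<le> n \<longrightarrow> sp G f k = f 0" for k
  proof (induction k)
    case 0 then show ?case by simp
  next
    case (Suc k)
    show ?case
    proof (cases "k = 0")
      case True then show ?thesis using assms by simp
    next
      case False then show ?thesis using Suc assms by simp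
    qed
  qed
  then show ?thesis using assms by simp
qed

locale ts =
  fixes A :: "('a, 'c) monoid_scheme" and B :: "('b, 'd) monoid_scheme" and p a b d e :: nat
  assumes p: "Factorial_Ring.prime p" and gA: "group A" and gB: "group B"
    and cA: "card (carrier A) = p ^ a" and cB: "card (carrier B) = p ^ b"
    and mA: "max_elem_ord A = p ^ d" and mB: "max_elem_ord B = p ^ e"
begin

sublocale A: group A by (rule gA)
sublocale B: group B by (rule gB)

abbreviation W where "W \<equiv> wreath A B"

lemma p1: "p > 1" using p by (rule prime_gt_1_nat)

lemma finA: "finite (carrier A)" using cA p1 by (intro card_ge_0_finite) simp
lemma finB: "finite (carrier B)" using cB p1 by (intro card_ge_0_finite) simp

lemma gW: "group W" by (rule wreath_group[OF gA gB])

lemma finW: "finite (carrier W)"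
  using finA finB by (simp add: wreath_carrier finite_PiE)

lemma cardW: "card (carrier W) = card (carrier A) ^ card (carrier B) * card (carrier B)"
  using finA finB by (simp add: wreath_carrier card_cartesian_product card_PiE)

lemma cW: "card (carrier W) = p ^ (a * p ^ b + b)"
  by (simp add: cardW cA cB power_mult power_add)

lemma ordA: "x \<in> carrier A \<Longrightarrow> A.ord x dvd p ^ d"
  using pgroup_facts(1)[OF gA finA cA p mA] by blast
lemma ordB: "x \<in> carrier B \<Longrightarrow> B.ord x dvd p ^ e"
  using pgroup_facts(1)[OF gB finB cB p mB] by blast
lemma exA: "\<exists>x\<in>carrier A. A.ord x = p ^ d"
  using pgroup_facts(2)[OF gA finA cA p mA] .
lemma exB: "\<exists>x\<in>carrier B. B.ord x = p ^ e"
  using pgroup_facts(2)[OF gB finB cB p mB] .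
lemma eb: "e \<le> b"
  using pgroup_facts(3)[OF gB finB cB p mB] .

lemma ordB_pow: "x \<in> carrier B \<Longrightarrow> \<exists>m\<le>e. B.ord x = p ^ m"
proof -
  assume x: "x \<in> carrier B"
  have "B.ord x dvd p ^ e" using ordB[OF x] .
  then show ?thesis using divides_primepow_nat[OF p] by blast
qed

lemma wreath_pow_mult:
  assumes al: "\<alpha> \<in> carrier B \<rightarrow>\<^sub>E carrier A" and x: "x \<in> carrier B"
  shows "(\<alpha>, x) [^]\<^bsub>W\<^esub> (q * B.ord x)
     = ((\<lambda>b\<in>carrier B. sp A (\<lambda>s. \<alpha> (inv\<^bsub>B\<^esub> x [^]\<^bsub>B\<^esub> s \<otimes>\<^bsub>B\<^esub> b)) (B.ord x) [^]\<^bsub>A\<^esub> q), \<one>\<^bsub>B\<^esub>)"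
proof -
  define n where "n = B.ord x"
  define y where "y = inv\<^bsub>B\<^esub> x"
  have y: "y \<in> carrier B" using x by (simp add: y_def)
  have yn: "y [^]\<^bsub>B\<^esub> n = \<one>\<^bsub>B\<^esub>" using x by (simp add: y_def n_def B.nat_pow_inv)
  have xn: "x [^]\<^bsub>B\<^esub> (q * n) = \<one>\<^bsub>B\<^esub>"
    using x by (simp add: n_def mult.commute[of q] B.nat_pow_pow[symmetric])
  have sp: "sp A (\<lambda>s. \<alpha> (y [^]\<^bsub>B\<^esub> s \<otimes>\<^bsub>B\<^esub> b)) (q * n) = sp A (\<lambda>s. \<alpha> (y [^]\<^bsub>B\<^esub> s \<otimes>\<^bsub>B\<^esub> b)) n [^]\<^bsub>A\<^esub> q"
    if b: "b \<in> carrier B" for b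
  proof (rule A.sp_periodic)
    fix s
    have "y [^]\<^bsub>B\<^esub> (s + n) = y [^]\<^bsub>B\<^esub> s" using y yn by (simp add: B.nat_pow_mult[symmetric])
    then show "\<alpha> (y [^]\<^bsub>B\<^esub> (s + n) \<otimes>\<^bsub>B\<^esub> b) = \<alpha> (y [^]\<^bsub>B\<^esub> s \<otimes>\<^bsub>B\<^esub> b)" by simp
    show "\<alpha> (y [^]\<^bsub>B\<^esub> s \<otimes>\<^bsub>B\<^esub> b) \<in> carrier A" using al y b by (auto simp: PiE_iff)
  qed
  show ?thesis
    unfolding wreath_pow[OF gA gB al x] using xn sp
    by (simp add: n_def[symmetric] y_def[symmetric] fun_eq_iff)
qed

lemma char:
  assumes al: "\<alpha> \<in> carrier B \<rightarrow>\<^sub>E carrier A" and x: "x \<in> carrier B" and m: "B.ord x = p ^ m"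
  shows "((\<alpha>, x) [^]\<^bsub>W\<^esub> (p ^ (m + j)) = \<one>\<^bsub>W\<^esub>) \<longleftrightarrow>
     (\<forall>b\<in>carrier B. sp A (\<lambda>s. \<alpha> (inv\<^bsub>B\<^esub> x [^]\<^bsub>B\<^esub> s \<otimes>\<^bsub>B\<^esub> b)) (p ^ m) [^]\<^bsub>A\<^esub> (p ^ j) = \<one>\<^bsub>A\<^esub>)"
proof -
  have "p ^ (m + j) = p ^ j * B.ord x" by (simp add: m power_add)
  then have "(\<alpha>, x) [^]\<^bsub>W\<^esub> (p ^ (m + j))
     = ((\<lambda>b\<in>carrier B. sp A (\<lambda>s. \<alpha> (inv\<^bsub>B\<^esub> x [^]\<^bsub>B\<^esub> s \<otimes>\<^bsub>B\<^esub> b)) (p ^ m) [^]\<^bsub>A\<^esub> (p ^ j)), \<one>\<^bsub>B\<^esub>)"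
    using wreath_pow_mult[OF al x, of "p ^ j"] m by simp
  then show ?thesis by (simp add: wreath_one restrict_def fun_eq_iff Ball_def)
qed

lemma not_small:
  assumes al: "\<alpha> \<in> carrier B \<rightarrow>\<^sub>E carrier A" and x: "x \<in> carrier B" and m: "B.ord x = p ^ m"
    and N: "N < m"
  shows "(\<alpha>, x) [^]\<^bsub>W\<^esub> (p ^ N) \<noteq> \<one>\<^bsub>W\<^esub>"
proof
  assume "(\<alpha>, x) [^]\<^bsub>W\<^esub> (p ^ N) = \<one>\<^bsub>W\<^esub>"
  then have "x [^]\<^bsub>B\<^esub> (p ^ N) = \<one>\<^bsub>B\<^esub>" by (simp add: wreath_pow[OF gA gB al x] wreath_one)
  then have "p ^ m dvd p ^ N" using B.pow_eq_id[OF x] m by simp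
  then have "m \<le> N" by (simp add: pdvd[OF p])
  with N show False by simp
qed

lemma ordW: "g \<in> carrier W \<Longrightarrow> \<exists>w. group.ord W g = p ^ w"
  by (rule ord_ppow[OF gW finW cW p])

end

context ts begin

lemma beta_closed:
  assumes al: "\<alpha> \<in> carrier B \<rightarrow>\<^sub>E carrier A" and x: "x \<in> carrier B" and z: "z \<in> carrier B"
  shows "sp A (\<lambda>s. \<alpha> (inv\<^bsub>B\<^esub> x [^]\<^bsub>B\<^esub> s \<otimes>\<^bsub>B\<^esub> z)) k \<in> carrier A"
  by (rule A.sp_closed) (use al x z in \<open>auto simp: PiE_iff\<close>)

lemma max_W: "max_elem_ord W = p ^ (d + e)"
proof -
  interpret Wg: group W by (rule gW)
  have up: "Wg.ord g dvd p ^ (d + e)" if g: "g \<in> carrier W" for g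
  proof -
    obtain \<alpha> x where g_eq: "g = (\<alpha>, x)" by (cases g)
    have al: "\<alpha> \<in> carrier B \<rightarrow>\<^sub>E carrier A" and x: "x \<in> carrier B"
      using g by (auto simp: g_eq wreath_carrier)
    obtain m where me: "m \<le> e" and m: "B.ord x = p ^ m" using ordB_pow[OF x] by blast
    have "\<forall>b\<in>carrier B. sp A (\<lambda>s. \<alpha> (inv\<^bsub>B\<^esub> x [^]\<^bsub>B\<^esub> s \<otimes>\<^bsub>B\<^esub> b)) (p ^ m) [^]\<^bsub>A\<^esub> (p ^ (d + e - m)) = \<one>\<^bsub>A\<^esub>"
    proof
      fix b assume b: "b \<in> carrier B"
      have c: "sp A (\<lambda>s. \<alpha> (inv\<^bsub>B\<^esub> x [^]\<^bsub>B\<^esub> s \<otimes>\<^bsub>B\<^esub> b)) (p ^ m) \<in> carrier A"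
        by (rule beta_closed[OF al x b])
      have "A.ord (sp A (\<lambda>s. \<alpha> (inv\<^bsub>B\<^esub> x [^]\<^bsub>B\<^esub> s \<otimes>\<^bsub>B\<^esub> b)) (p ^ m)) dvd p ^ d" by (rule ordA[OF c])
      also have "p ^ d dvd p ^ (d + e - m)" using me by (simp add: le_imp_power_dvd)
      finally show "sp A (\<lambda>s. \<alpha> (inv\<^bsub>B\<^esub> x [^]\<^bsub>B\<^esub> s \<otimes>\<^bsub>B\<^esub> b)) (p ^ m) [^]\<^bsub>A\<^esub> (p ^ (d + e - m)) = \<one>\<^bsub>A\<^esub>"
        using A.pow_eq_id[OF c] by simp
    qed
    then have "(\<alpha>, x) [^]\<^bsub>W\<^esub> (p ^ (m + (d + e - m))) = \<one>\<^bsub>W\<^esub>" by (simp only: char[OF al x m])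
    moreover have "m + (d + e - m) = d + e" using me by simp
    ultimately have "g [^]\<^bsub>W\<^esub> (p ^ (d + e)) = \<one>\<^bsub>W\<^esub>" by (simp add: g_eq)
    then show ?thesis using Wg.pow_eq_id[OF g] by simp
  qed
  obtain x0 where x0: "x0 \<in> carrier B" "B.ord x0 = p ^ e" using exB by blast
  obtain a0 where a0: "a0 \<in> carrier A" "A.ord a0 = p ^ d" using exA by blast
  define \<alpha>0 where "\<alpha>0 = (\<lambda>b\<in>carrier B. if b = \<one>\<^bsub>B\<^esub> then a0 else \<one>\<^bsub>A\<^esub>)"
  have al0: "\<alpha>0 \<in> carrier B \<rightarrow>\<^sub>E carrier A" using a0 by (auto simp: \<alpha>0_def)
  have g0: "(\<alpha>0, x0) \<in> carrier W" using al0 x0 by (simp add: wreath_carrier)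
  obtain w where w: "Wg.ord (\<alpha>0, x0) = p ^ w" using ordW[OF g0] by blast
  have pw: "(\<alpha>0, x0) [^]\<^bsub>W\<^esub> (p ^ w) = \<one>\<^bsub>W\<^esub>" using Wg.pow_ord_eq_1[OF g0] w by simp
  have we: "e \<le> w"
  proof (rule ccontr)
    assume "\<not> e \<le> w"
    then have "w < e" by simp
    from not_small[OF al0 x0(1) x0(2) this] pw show False by simp
  qed
  have "(\<alpha>0, x0) [^]\<^bsub>W\<^esub> (p ^ (e + (w - e))) = \<one>\<^bsub>W\<^esub>" using pw we by simp
  then have allb: "\<forall>b\<in>carrier B. sp A (\<lambda>s. \<alpha>0 (inv\<^bsub>B\<^esub> x0 [^]\<^bsub>B\<^esub> s \<otimes>\<^bsub>B\<^esub> b)) (p ^ e) [^]\<^bsub>A\<^esub> (p ^ (w - e)) = \<one>\<^bsub>A\<^esub>"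
    by (simp only: char[OF al0 x0(1) x0(2)])
  have "sp A (\<lambda>s. \<alpha>0 (inv\<^bsub>B\<^esub> x0 [^]\<^bsub>B\<^esub> s \<otimes>\<^bsub>B\<^esub> \<one>\<^bsub>B\<^esub>)) (p ^ e) = \<alpha>0 (inv\<^bsub>B\<^esub> x0 [^]\<^bsub>B\<^esub> (0::nat) \<otimes>\<^bsub>B\<^esub> \<one>\<^bsub>B\<^esub>)"
  proof (rule A.sp_single)
    fix s :: nat assume s: "0 < s" "s < p ^ e"
    have ix: "inv\<^bsub>B\<^esub> x0 \<in> carrier B" using x0 by simp
    have "B.ord (inv\<^bsub>B\<^esub> x0) = p ^ e" using x0 by simp
    then have "inv\<^bsub>B\<^esub> x0 [^]\<^bsub>B\<^esub> s \<noteq> \<one>\<^bsub>B\<^esub>"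
      using B.pow_eq_id[OF ix, of s] s by (auto dest: dvd_imp_le)
    then show "\<alpha>0 (inv\<^bsub>B\<^esub> x0 [^]\<^bsub>B\<^esub> s \<otimes>\<^bsub>B\<^esub> \<one>\<^bsub>B\<^esub>) = \<one>\<^bsub>A\<^esub>" using ix by (simp add: \<alpha>0_def)
  next
    show "\<alpha>0 (inv\<^bsub>B\<^esub> x0 [^]\<^bsub>B\<^esub> (0::nat) \<otimes>\<^bsub>B\<^esub> \<one>\<^bsub>B\<^esub>) \<in> carrier A" using a0 by (simp add: \<alpha>0_def)
    show "0 < p ^ e" using p1 by simp
  qed
  also have "\<dots> = a0" by (simp add: \<alpha>0_def)
  finally have "a0 [^]\<^bsub>A\<^esub> (p ^ (w - e)) = \<one>\<^bsub>A\<^esub>" using allb by auto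
  then have "p ^ d dvd p ^ (w - e)" using A.pow_eq_id[OF a0(1)] a0(2) by simp
  then have "d \<le> w - e" by (simp add: pdvd[OF p])
  then have "p ^ (d + e) \<le> p ^ w" using we p1 by (simp add: power_increasing)
  moreover have "p ^ w \<le> p ^ (d + e)" using up[OF g0] w p1 by (simp add: dvd_imp_le)
  ultimately have ord0: "Wg.ord (\<alpha>0, x0) = p ^ (d + e)" using w by simp
  show ?thesis unfolding max_elem_ord_def
  proof (rule Max_eqI)
    show "finite (Wg.ord ` carrier W)" using finW by simp
    show "y \<le> p ^ (d + e)" if "y \<in> Wg.ord ` carrier W" for y
      using that up p1 by (auto intro: dvd_imp_le)
    show "p ^ (d + e) \<in> Wg.ord ` carrier W" using g0 ord0 by force
  qed
qed

end

context ts begin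

definition cS :: "int \<Rightarrow> nat \<Rightarrow> nat" where
  "cS k i = card {z \<in> carrier A. k - int i \<le> int d \<and> z [^]\<^bsub>A\<^esub> (p ^ nat (int d - (k - int i))) = \<one>\<^bsub>A\<^esub>}"

definition FF :: "int \<Rightarrow> 'b \<Rightarrow> ('b \<Rightarrow> 'a) set" where
  "FF k x = {\<alpha> \<in> carrier B \<rightarrow>\<^sub>E carrier A. k \<le> int (d + e) \<and> (\<alpha>, x) [^]\<^bsub>W\<^esub> (p ^ nat (int (d + e) - k)) = \<one>\<^bsub>W\<^esub>}"

lemma count_x:
  assumes x: "x \<in> carrier B" and m: "B.ord x = p ^ m" and me: "m \<le> e"
  shows "card (FF k x) = (cS k (e - m) * card (carrier A) ^ (p ^ m - 1)) ^ (p ^ (b - m))"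
proof -
  define i where "i = e - m"
  define P where "P z = (k - int i \<le> int d \<and> z [^]\<^bsub>A\<^esub> (p ^ nat (int d - (k - int i))) = \<one>\<^bsub>A\<^esub>)" for z
  have ix: "inv\<^bsub>B\<^esub> x \<in> carrier B" using x by simp
  interpret X: wr A B "inv\<^bsub>B\<^esub> x" P
  proof unfold_locales
    show "inv\<^bsub>B\<^esub> x \<in> carrier B" by (rule ix)
    show "finite (carrier B)" by (rule finB)
    show "finite (carrier A)" by (rule finA)
    fix g h assume g: "g \<in> carrier A" and h: "h \<in> carrier A"
    show "P (inv\<^bsub>A\<^esub> g \<otimes>\<^bsub>A\<^esub> h \<otimes>\<^bsub>A\<^esub> g) = P h"
      unfolding P_def using A.conj_pow_eq_one[OF g h] by simp
  qed
  have Xn: "B.ord (inv\<^bsub>B\<^esub> x) = p ^ m" using x m by simp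
  have Xbet: "X.bet \<alpha> z = sp A (\<lambda>s. \<alpha> (inv\<^bsub>B\<^esub> x [^]\<^bsub>B\<^esub> s \<otimes>\<^bsub>B\<^esub> z)) (p ^ m)" for \<alpha> z
    by (simp add: X.bet_def Xn)
  have eq: "FF k x = X.GG (carrier B)"
    unfolding FF_def X.GG_def
  proof (intro Collect_cong conj_cong refl)
    fix \<alpha> assume al: "\<alpha> \<in> carrier B \<rightarrow>\<^sub>E carrier A"
    show "(k \<le> int (d + e) \<and> (\<alpha>, x) [^]\<^bsub>W\<^esub> (p ^ nat (int (d + e) - k)) = \<one>\<^bsub>W\<^esub>) \<longleftrightarrow>
          (\<forall>z\<in>carrier B. P (X.bet \<alpha> z))"
    proof (cases "k - int i \<le> int d")
      case True
      define j where "j = nat (int d - (k - int i))"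
      have kk: "k \<le> int (d + e)" using True me by (simp add: i_def)
      have N: "nat (int (d + e) - k) = m + j" using True me by (simp add: i_def j_def)
      have "(k \<le> int (d + e) \<and> (\<alpha>, x) [^]\<^bsub>W\<^esub> (p ^ nat (int (d + e) - k)) = \<one>\<^bsub>W\<^esub>) \<longleftrightarrow>
            (\<alpha>, x) [^]\<^bsub>W\<^esub> (p ^ (m + j)) = \<one>\<^bsub>W\<^esub>" using kk N by simp
      also have "\<dots> \<longleftrightarrow> (\<forall>z\<in>carrier B. sp A (\<lambda>s. \<alpha> (inv\<^bsub>B\<^esub> x [^]\<^bsub>B\<^esub> s \<otimes>\<^bsub>B\<^esub> z)) (p ^ m) [^]\<^bsub>A\<^esub> (p ^ j) = \<one>\<^bsub>A\<^esub>)"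
        by (rule char[OF al x m])
      also have "\<dots> \<longleftrightarrow> (\<forall>z\<in>carrier B. P (X.bet \<alpha> z))"
        using True by (simp add: P_def Xbet j_def)
      finally show ?thesis .
    next
      case False
      have r: "\<not> (\<forall>z\<in>carrier B. P (X.bet \<alpha> z))" using False by (auto simp: P_def)
      have l: "\<not> (k \<le> int (d + e) \<and> (\<alpha>, x) [^]\<^bsub>W\<^esub> (p ^ nat (int (d + e) - k)) = \<one>\<^bsub>W\<^esub>)"
      proof
        assume a: "k \<le> int (d + e) \<and> (\<alpha>, x) [^]\<^bsub>W\<^esub> (p ^ nat (int (d + e) - k)) = \<one>\<^bsub>W\<^esub>"
        have "nat (int (d + e) - k) < m" using False a me by (simp add: i_def nat_less_iff)
        from not_small[OF al x m this] a show False by simp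
      qed
      from l r show ?thesis by blast
    qed
  qed
  have cl: "X.closed (carrier B)" unfolding X.closed_def using ix by simp
  obtain q where q1: "card (carrier B) = q * B.ord (inv\<^bsub>B\<^esub> x)"
    and q2: "card (X.GG (carrier B)) = (card {a \<in> carrier A. P a} * card (carrier A) ^ (B.ord (inv\<^bsub>B\<^esub> x) - 1)) ^ q"
    using X.main_count[OF cl] by blast
  have "m \<le> b" using me eb by simp
  then have pb: "p ^ b = p ^ (b - m) * p ^ m" by (simp flip: power_add)
  have c1: "card (carrier B) = q * p ^ m" using q1 Xn by simp
  have c2: "card (carrier B) = p ^ (b - m) * p ^ m" using cB pb by simp
  have "q * p ^ m = p ^ (b - m) * p ^ m" by (metis c1 c2)
  moreover have pm: "p ^ m \<noteq> 0" using p1 by simp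
  ultimately have q: "q = p ^ (b - m)" unfolding mult_right_cancel[OF pm] by blast
  have "{a \<in> carrier A. P a} = {z \<in> carrier A. k - int i \<le> int d \<and> z [^]\<^bsub>A\<^esub> (p ^ nat (int d - (k - int i))) = \<one>\<^bsub>A\<^esub>}"
    by (simp add: P_def)
  then have "card {a \<in> carrier A. P a} = cS k (e - m)" by (simp add: cS_def i_def)
  then show ?thesis using eq q2 q Xn by simp
qed

end

lemma alg:
  fixes cA cS n q :: nat
  assumes "cA > 0" "n \<ge> 1"
  shows "real ((cS * cA ^ (n - 1)) ^ q) = (real cS / real cA) ^ q * real cA ^ (n * q)"
proof -
  have L: "real ((cS * cA ^ (n - 1)) ^ q) = real cS ^ q * real cA ^ ((n - 1) * q)"
    by (simp only: of_nat_power of_nat_mult power_mult_distrib power_mult)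
  have nq: "n * q = q + (n - 1) * q" using assms(2)
    by (metis add.commute le_add_diff_inverse2 mult.commute mult_Suc_right plus_1_eq_Suc)
  have e1: "real cA ^ (n * q) = real cA ^ q * real cA ^ ((n - 1) * q)"
    by (simp only: nq power_add)
  have e2: "(real cS / real cA) ^ q * real cA ^ q = real cS ^ q"
    using assms(1) by (simp add: power_divide)
  have "(real cS / real cA) ^ q * real cA ^ (n * q) = ((real cS / real cA) ^ q * real cA ^ q) * real cA ^ ((n - 1) * q)"
    by (simp only: e1 mult.assoc)
  also have "\<dots> = real cS ^ q * real cA ^ ((n - 1) * q)" by (simp only: e2)
  finally show ?thesis using L by simp
qed

context ts begin

definition Bi :: "nat \<Rightarrow> 'b set" where "Bi i = {x \<in> carrier B. B.ord x = p ^ (e - i)}"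

definition Gk :: "int \<Rightarrow> nat \<Rightarrow> nat" where
  "Gk k i = (cS k i * card (carrier A) ^ (p ^ (e - i) - 1)) ^ (p ^ (b - e + i))"

lemma card_T:
  "card {g \<in> carrier W. k \<le> int (d + e) \<and> g [^]\<^bsub>W\<^esub> (p ^ nat (int (d + e) - k)) = \<one>\<^bsub>W\<^esub>}
     = (\<Sum>x\<in>carrier B. card (FF k x))"
proof -
  have eq: "{g \<in> carrier W. k \<le> int (d + e) \<and> g [^]\<^bsub>W\<^esub> (p ^ nat (int (d + e) - k)) = \<one>\<^bsub>W\<^esub>}
      = (\<lambda>(x, \<alpha>). (\<alpha>, x)) ` (SIGMA x:carrier B. FF k x)" (is "?L = ?R")
  proof
    show "?L \<subseteq> ?R"
    proof
      fix g assume g: "g \<in> ?L"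
      obtain \<alpha> x where ge: "g = (\<alpha>, x)" by (cases g)
      have "(x, \<alpha>) \<in> (SIGMA x:carrier B. FF k x)" using g by (simp add: ge FF_def wreath_carrier)
      then show "g \<in> ?R" by (rule rev_image_eqI) (simp add: ge)
    qed
    show "?R \<subseteq> ?L"
    proof
      fix g assume "g \<in> ?R"
      then obtain x \<alpha> where xa: "(x, \<alpha>) \<in> (SIGMA x:carrier B. FF k x)" and ge: "g = (\<alpha>, x)" by auto
      then show "g \<in> ?L" by (simp add: FF_def wreath_carrier)
    qed
  qed
  have inj: "inj_on (\<lambda>(x, \<alpha>). (\<alpha>, x)) (SIGMA x:carrier B. FF k x)"
    by (auto simp: inj_on_def)
  have fin: "finite (FF k x)" for x
    by (rule finite_subset[of _ "carrier B \<rightarrow>\<^sub>E carrier A"]) (auto simp: FF_def finA finB finite_PiE)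
  show ?thesis unfolding eq card_image[OF inj]
    by (rule card_SigmaI) (use finB fin in auto)
qed

lemma sum_part: "(\<Sum>x\<in>carrier B. h x) = (\<Sum>i\<in>{0..e}. \<Sum>x\<in>Bi i. h x)"
proof -
  have U: "carrier B = (\<Union>i\<in>{0..e}. Bi i)"
  proof
    show "carrier B \<subseteq> (\<Union>i\<in>{0..e}. Bi i)"
    proof
      fix x assume x: "x \<in> carrier B"
      obtain m where "m \<le> e" "B.ord x = p ^ m" using ordB_pow[OF x] by blast
      then have "x \<in> Bi (e - m)" "e - m \<in> {0..e}" using x by (auto simp: Bi_def)
      then show "x \<in> (\<Union>i\<in>{0..e}. Bi i)" by blast
    qed
  qed (auto simp: Bi_def)
  have D: "\<forall>i\<in>{0..e}. \<forall>j\<in>{0..e}. i \<noteq> j \<longrightarrow> Bi i \<inter> Bi j = {}"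
  proof (intro ballI impI)
    fix i j assume i: "i \<in> {0..e}" and j: "j \<in> {0..e}" and ij: "i \<noteq> j"
    show "Bi i \<inter> Bi j = {}"
    proof (rule ccontr)
      assume "Bi i \<inter> Bi j \<noteq> {}"
      then have "p ^ (e - i) = p ^ (e - j)" by (auto simp: Bi_def)
      then have "e - i = e - j" using p1 by (simp add: power_inject_exp)
      with i j ij show False by auto
    qed
  qed
  have F: "\<forall>i\<in>{0..e}. finite (Bi i)" using finB by (auto simp: Bi_def)
  show ?thesis by (subst U) (rule sum.UNION_disjoint[OF _ F D], simp)
qed

lemma FF_Bi: assumes i: "i \<le> e" and x: "x \<in> Bi i" shows "card (FF k x) = Gk k i"
proof -
  have xB: "x \<in> carrier B" and o: "B.ord x = p ^ (e - i)" using x by (auto simp: Bi_def)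
  have "card (FF k x) = (cS k (e - (e - i)) * card (carrier A) ^ (p ^ (e - i) - 1)) ^ (p ^ (b - (e - i)))"
    by (rule count_x[OF xB o]) simp
  moreover have "e - (e - i) = i" "b - (e - i) = b - e + i" using i eb by auto
  ultimately show ?thesis by (simp add: Gk_def)
qed

lemma card_Bi:
  assumes i: "i \<le> e"
  shows "real (card (Bi i)) = real (card {x \<in> carrier B. int i \<le> int e \<and> x [^]\<^bsub>B\<^esub> (p ^ nat (int e - int i)) = \<one>\<^bsub>B\<^esub>})
     - real (card {x \<in> carrier B. int i + 1 \<le> int e \<and> x [^]\<^bsub>B\<^esub> (p ^ nat (int e - (int i + 1))) = \<one>\<^bsub>B\<^esub>})"
    (is "_ = real (card ?R1) - real (card ?R2)")
proof -
  have sub: "?R2 \<subseteq> ?R1"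
  proof
    fix x assume "x \<in> ?R2"
    then have x: "x \<in> carrier B" and i1: "int i + 1 \<le> int e" and px: "x [^]\<^bsub>B\<^esub> (p ^ nat (int e - (int i + 1))) = \<one>\<^bsub>B\<^esub>" by auto
    have "p ^ nat (int e - (int i + 1)) dvd p ^ nat (int e - int i)" by (rule le_imp_power_dvd) simp
    then have "B.ord x dvd p ^ nat (int e - int i)" using B.pow_eq_id[OF x] px dvd_trans by blast
    then show "x \<in> ?R1" using x i B.pow_eq_id[OF x] by simp
  qed
  have "\<forall>x. x \<in> Bi i \<longleftrightarrow> x \<in> ?R1 - ?R2"
  proof (intro allI iffI)
    fix x assume "x \<in> Bi i"
    then have x: "x \<in> carrier B" and o: "B.ord x = p ^ (e - i)" by (auto simp: Bi_def)
    have "x \<in> ?R1" using x o i B.pow_eq_id[OF x] by (simp add: nat_diff_distrib)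
    moreover have "x \<notin> ?R2"
    proof
      assume "x \<in> ?R2"
      then have "p ^ (e - i) dvd p ^ nat (int e - (int i + 1))" using o B.pow_eq_id[OF x] by simp
      then have "e - i \<le> nat (int e - (int i + 1))" by (simp add: pdvd[OF p])
      moreover have "int i + 1 \<le> int e" using \<open>x \<in> ?R2\<close> by simp
      ultimately show False by simp
    qed
    ultimately show "x \<in> ?R1 - ?R2" by simp
  next
    fix x assume xr: "x \<in> ?R1 - ?R2"
    then have x: "x \<in> carrier B" by simp
    obtain u where u: "B.ord x = p ^ u" using ordB_pow[OF x] by blast
    have "p ^ u dvd p ^ nat (int e - int i)" using xr u B.pow_eq_id[OF x] by simp
    then have u1: "u \<le> e - i" by (simp add: pdvd[OF p] nat_diff_distrib)
    have "\<not> (int i + 1 \<le> int e \<and> u \<le> nat (int e - (int i + 1)))"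
    proof
      assume a: "int i + 1 \<le> int e \<and> u \<le> nat (int e - (int i + 1))"
      then have "p ^ u dvd p ^ nat (int e - (int i + 1))" by (simp add: pdvd[OF p])
      then have "x \<in> ?R2" using a x u B.pow_eq_id[OF x] by simp
      with xr show False by blast
    qed
    then have "u = e - i" using u1 i by auto
    then show "x \<in> Bi i" using x u by (simp add: Bi_def)
  qed
  then have "Bi i = ?R1 - ?R2" by blast
  moreover have "finite ?R2" using finB by simp
  moreover have "card ?R2 \<le> card ?R1" using sub finB by (intro card_mono) auto
  ultimately show ?thesis using sub by (simp add: card_Diff_subset of_nat_diff)
qed

end

context ts begin

lemma r_formula:
  "r_ratio p W k = (\<Sum>i=0..e. (r_ratio p B (int i) - r_ratio p B (int i + 1))
                      * (r_ratio p A (k - int i)) ^ (p ^ (b - e + i)))"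
proof -
  define cAr where "cAr = real (card (carrier A))"
  define cBr where "cBr = real (card (carrier B))"
  have cA0: "card (carrier A) > 0" using cA p1 by simp
  have cB0: "cBr > 0" using cB p1 by (simp add: cBr_def)
  have cAr0: "cAr > 0" using cA0 by (simp add: cAr_def)
  have rW: "r_ratio p W k = real (card {g \<in> carrier W. k \<le> int (d + e) \<and> g [^]\<^bsub>W\<^esub> (p ^ nat (int (d + e) - k)) = \<one>\<^bsub>W\<^esub>})
            / real (card (carrier W))"
    by (rule r_ratio_eq[OF gW finW cW p max_W])
  have cT: "card {g \<in> carrier W. k \<le> int (d + e) \<and> g [^]\<^bsub>W\<^esub> (p ^ nat (int (d + e) - k)) = \<one>\<^bsub>W\<^esub>}
      = (\<Sum>i=0..e. card (Bi i) * Gk k i)"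
  proof -
    have "(\<Sum>x\<in>carrier B. card (FF k x)) = (\<Sum>i\<in>{0..e}. \<Sum>x\<in>Bi i. card (FF k x))" by (rule sum_part)
    also have "\<dots> = (\<Sum>i\<in>{0..e}. card (Bi i) * Gk k i)"
      by (rule sum.cong) (simp_all add: FF_Bi)
    finally show ?thesis using card_T by simp
  qed
  have tm: "real (card (Bi i) * Gk k i) / real (card (carrier W))
      = (r_ratio p B (int i) - r_ratio p B (int i + 1)) * (r_ratio p A (k - int i)) ^ (p ^ (b - e + i))"
    if i: "i \<in> {0..e}" for i
  proof -
    have ie: "i \<le> e" using i by simp
    have rB1: "r_ratio p B (int i) = real (card {x \<in> carrier B. int i \<le> int e \<and> x [^]\<^bsub>B\<^esub> (p ^ nat (int e - int i)) = \<one>\<^bsub>B\<^esub>}) / cBr"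
      unfolding cBr_def by (rule r_ratio_eq[OF gB finB cB p mB])
    have rB2: "r_ratio p B (int i + 1) = real (card {x \<in> carrier B. int i + 1 \<le> int e \<and> x [^]\<^bsub>B\<^esub> (p ^ nat (int e - (int i + 1))) = \<one>\<^bsub>B\<^esub>}) / cBr"
      unfolding cBr_def by (rule r_ratio_eq[OF gB finB cB p mB])
    have dB: "r_ratio p B (int i) - r_ratio p B (int i + 1) = real (card (Bi i)) / cBr"
      unfolding rB1 rB2 card_Bi[OF ie] by (simp add: diff_divide_distrib)
    have rA: "r_ratio p A (k - int i) = real (cS k i) / cAr"
      unfolding cAr_def cS_def by (rule r_ratio_eq[OF gA finA cA p mA])
    define n where "n = p ^ (e - i)"
    define q where "q = p ^ (b - e + i)"
    have nq: "n * q = card (carrier B)" using ie eb by (simp add: n_def q_def cB flip: power_add)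
    have n1: "n \<ge> 1" using p1 by (simp add: n_def)
    have G: "real (Gk k i) = (real (cS k i) / cAr) ^ q * cAr ^ card (carrier B)"
      unfolding Gk_def n_def[symmetric] q_def[symmetric] cAr_def
      using alg[OF cA0 n1, of "cS k i" q] nq by simp
    have cWr: "real (card (carrier W)) = cAr ^ card (carrier B) * cBr"
      by (simp add: cardW cAr_def cBr_def)
    have "real (card (Bi i) * Gk k i) / real (card (carrier W))
        = real (card (Bi i)) * ((real (cS k i) / cAr) ^ q * cAr ^ card (carrier B)) / (cAr ^ card (carrier B) * cBr)"
      by (simp only: of_nat_mult G cWr)
    also have "\<dots> = real (card (Bi i)) / cBr * (real (cS k i) / cAr) ^ q"
      using cAr0 cB0 by (simp add: field_simps)
    finally show ?thesis by (simp add: dB rA q_def)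
  qed
  have "r_ratio p W k = real (\<Sum>i=0..e. card (Bi i) * Gk k i) / real (card (carrier W))"
    by (simp only: rW cT)
  also have "\<dots> = (\<Sum>i=0..e. real (card (Bi i) * Gk k i) / real (card (carrier W)))"
    by (simp add: sum_divide_distrib)
  also have "\<dots> = (\<Sum>i=0..e. (r_ratio p B (int i) - r_ratio p B (int i + 1))
                      * (r_ratio p A (k - int i)) ^ (p ^ (b - e + i)))"
    by (intro sum.cong refl) (rule tm)
  finally show ?thesis .
qed

end

theorem theorem5:
  fixes A :: "('a, 'c) monoid_scheme" and B :: "('b, 'd) monoid_scheme"
    and p a b d e :: nat
  assumes "Factorial_Ring.prime p"
    and "group A" and "group B"
    and "card (carrier A) = p ^ a" and "card (carrier B) = p ^ b"
    and "a \<ge> 1" and "b \<ge> 1"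
    and "max_elem_ord A = p ^ d" and "max_elem_ord B = p ^ e"
  shows "max_elem_ord (wreath A B) = p ^ (d + e)
    \<and> (\<forall>k::int. r_ratio p (wreath A B) k =
         (\<Sum>i=0..e. (r_ratio p B (int i) - r_ratio p B (int i + 1))
                      * (r_ratio p A (k - int i)) ^ (p ^ (b - e + i))))"
proof -
  interpret T: ts A B p a b d e
    by (rule ts.intro[OF assms(1,2,3,4,5,8,9)])
  show ?thesis using T.max_W T.r_formula by blast
qed

end
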